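(* Let $\alpha\in\ell^2$, let $I$ be a finite interval in $\mathbb{N}$ with endpoints $a\le b$, and let $\epsilon>0$. Suppose that the set $S(\epsilon)=\{k\in\mathbb{N}: Z_k\subseteq I,\ \sigma_k>\epsilon\}$ has at least $4$ distinct elements. Then $J(I)>\epsilon/2$ and $L(I)>\epsilon/(2\sqrt2)$.
   Context: $\mathbb{N}=\{0,1,2,\dots\}$; $Z_k=[2^k,2^{k+1}-1]\cap\mathbb{N}$; $\sigma_k=(\sum_{j=2^k}^{2^{k+1}-1}(j+1)|\alpha_j|^2)^{1/2}$. $J(I)=\inf_{c\in I}\max(A_c,B_c)$ with $A_c=\sup_{a\le s\le c}(c-s)^{1/2}(\sum_{k=a}^s|\alpha_k|^2)^{1/2}$, $B_c=\sup_{c\le s\le b}(s-c)^{1/2}(\sum_{k=s}^b|\alpha_k|^2)^{1/2}$. $L(I)=(\sup_{\|f\|_{2,I}\le1}l(I,f)/\mu(I))^{1/2}$ where $\mu(I)=\sum_{k\in I}|\alpha_k|^2$, $\|f\|_{2,I}=(\sum_{k\in I}|f(k)|^2)^{1/2}$, $l(I,f)=\sum_{k\in I}\sum_{n\in I\setminus\{k\}}|\alpha_k\alpha_n\sum_{j=\min(k,n)+1}^{\max(k,n)}f(j)|^2$ (sup over $f$ supported in $I$; $L(I)=0$ if $\alpha$ vanishes on $I$). *)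

theory Defs
  imports "HOL-Analysis.Analysis"
begin

definition Zblock :: "nat \<Rightarrow> nat set" where
  "Zblock k = {2^k .. 2^(k+1) - 1}"

definition sigma :: "(nat \<Rightarrow> complex) \<Rightarrow> nat \<Rightarrow> real" where
  "sigma \<alpha> k = sqrt (\<Sum>j = 2^k .. 2^(k+1) - 1. real (j + 1) * (cmod (\<alpha> j))^2)"

definition Aval :: "(nat \<Rightarrow> complex) \<Rightarrow> nat \<Rightarrow> nat \<Rightarrow> real" where
  "Aval \<alpha> a c = Max ((\<lambda>s. sqrt (real c - real s) * sqrt (\<Sum>k = a..s. (cmod (\<alpha> k))^2)) ` {a..c})"

definition Bval :: "(nat \<Rightarrow> complex) \<Rightarrow> nat \<Rightarrow> nat \<Rightarrow> real" where
  "Bval \<alpha> b c = Max ((\<lambda>s. sqrt (real s - real c) * sqrt (\<Sum>k = s..b. (cmod (\<alpha> k))^2)) ` {c..b})"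

definition Jval :: "(nat \<Rightarrow> complex) \<Rightarrow> nat \<Rightarrow> nat \<Rightarrow> real" where
  "Jval \<alpha> a b = Min ((\<lambda>c. max (Aval \<alpha> a c) (Bval \<alpha> b c)) ` {a..b})"

definition muI :: "(nat \<Rightarrow> complex) \<Rightarrow> nat set \<Rightarrow> real" where
  "muI \<alpha> I = (\<Sum>k\<in>I. (cmod (\<alpha> k))^2)"

definition norm2I :: "nat set \<Rightarrow> (nat \<Rightarrow> complex) \<Rightarrow> real" where
  "norm2I I f = sqrt (\<Sum>k\<in>I. (cmod (f k))^2)"

definition lval :: "(nat \<Rightarrow> complex) \<Rightarrow> nat set \<Rightarrow> (nat \<Rightarrow> complex) \<Rightarrow> real" where
  "lval \<alpha> I f = (\<Sum>k\<in>I. \<Sum>n\<in>I - {k}.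
      (cmod (\<alpha> k * \<alpha> n * (\<Sum>j = min k n + 1 .. max k n. f j)))^2)"

definition Lval :: "(nat \<Rightarrow> complex) \<Rightarrow> nat set \<Rightarrow> real" where
  "Lval \<alpha> I = (if muI \<alpha> I = 0 then 0 else
      sqrt (Sup {lval \<alpha> I f / muI \<alpha> I | f. (\<forall>k. k \<notin> I \<longrightarrow> f k = 0) \<and> norm2I I f \<le> 1}))"

end

theory Submission
  imports Defs
begin

lemma four_elems:
  fixes S :: "nat set"
  assumes "card S \<ge> 4"
  shows "\<exists>k1 k2 k3 k4. k1 < k2 \<and> k2 < k3 \<and> k3 < k4 \<and> k1 \<in> S \<and> k2 \<in> S \<and> k3 \<in> S \<and> k4 \<in> S"
proof -
  have fin: "finite S" using assms by (metis card.infinite not_numeral_le_zero)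
  define xs where "xs = sorted_list_of_set S"
  have len: "length xs \<ge> 4" using assms fin by (simp add: xs_def)
  have ss: "sorted_wrt (<) xs" by (simp add: xs_def)
  have st: "set xs = S" using fin by (simp add: xs_def)
  have "xs!0 < xs!1" "xs!1 < xs!2" "xs!2 < xs!3"
    using sorted_wrt_nth_less[OF ss] len by auto
  moreover have "xs!0 \<in> S" "xs!1 \<in> S" "xs!2 \<in> S" "xs!3 \<in> S"
    unfolding st[symmetric] using len by (auto intro!: nth_mem)
  ultimately show ?thesis by blast
qed

lemma block_mass:
  assumes "sigma \<alpha> k > \<epsilon>" "\<epsilon> > 0"
  shows "2^(k+1) * (\<Sum>j=2^k..2^(k+1)-1. (cmod (\<alpha> j))^2) > \<epsilon>^2"
proof -
  define X where "X = (\<Sum>j = 2^k .. 2^(k+1) - 1. real (j + 1) * (cmod (\<alpha> j))^2)"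
  have X0: "X \<ge> 0" unfolding X_def by (intro sum_nonneg) auto
  have "sqrt X > \<epsilon>" using assms(1) by (simp add: sigma_def X_def)
  hence "\<epsilon>^2 < X" using assms(2) X0
    by (metis abs_of_nonneg less_eq_real_def real_sqrt_abs real_sqrt_less_iff)
  also have "X \<le> (\<Sum>j = 2^k .. 2^(k+1) - 1. 2^(k+1) * (cmod (\<alpha> j))^2)"
    unfolding X_def
  proof (intro sum_mono mult_right_mono)
    fix j assume "j \<in> {2^k .. 2^(k+1) - 1::nat}"
    moreover have "(2::nat)^(k+1) > 0" by simp
    ultimately have "j + 1 \<le> (2::nat)^(k+1)" by (simp only: atLeastAtMost_iff) linarith
    hence "real (j+1) \<le> real (2^(k+1))" by linarith
    thus "real (j+1) \<le> 2^(k+1)" by simp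
  qed auto
  also have "\<dots> = 2^(k+1) * (\<Sum>j=2^k..2^(k+1)-1. (cmod (\<alpha> j))^2)"
    by (simp add: sum_distrib_left)
  finally show ?thesis .
qed

lemma sqrt_prod_gt:
  fixes x y e :: real
  assumes "x \<ge> 0" "y \<ge> 0" "x * y > e^2"
  shows "sqrt x * sqrt y > e"
  using assms by (simp add: real_sqrt_mult[symmetric] real_less_rsqrt)

lemma mu_mono:
  assumes "A \<subseteq> B" "finite B"
  shows "muI \<alpha> A \<le> muI \<alpha> B"
  unfolding muI_def using assms by (intro sum_mono2) auto

lemma lval_lower:
  fixes \<alpha> :: "nat \<Rightarrow> complex"
  assumes LI: "L \<subseteq> I" and RI: "R \<subseteq> I" and fin: "finite I"
    and ord: "\<And>k n. k \<in> L \<Longrightarrow> n \<in> R \<Longrightarrow> k < n \<and> T \<subseteq> {k+1..n}"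
    and finT: "finite T" and Tne: "T \<noteq> {}"
    and fdef: "f = (\<lambda>j. if j \<in> T then complex_of_real (1 / sqrt (real (card T))) else 0)"
  shows "lval \<alpha> I f \<ge> real (card T) * muI \<alpha> L * muI \<alpha> R"
proof -
  define m where "m = real (card T)"
  have mpos: "m > 0" using finT Tne by (simp add: m_def card_gt_0_iff)
  define g where "g k n = (cmod (\<alpha> k * \<alpha> n * (\<Sum>j = min k n + 1 .. max k n. f j)))^2" for k n
  have key: "g k n = (cmod (\<alpha> k))^2 * (cmod (\<alpha> n))^2 * m" if "k \<in> L" "n \<in> R" for k n
  proof -
    from ord[OF that] have kn: "k < n" and Tsub: "T \<subseteq> {k+1..n}" by auto
    have "(\<Sum>j = min k n + 1 .. max k n. f j) = (\<Sum>j = k + 1 .. n. f j)" using kn by simp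
    also have "\<dots> = (\<Sum>j\<in>T. complex_of_real (1 / sqrt m))"
      unfolding fdef m_def
      by (rule sum.mono_neutral_cong_left[symmetric]) (use Tsub in auto)
    also have "\<dots> = complex_of_real (sqrt m)"
    proof -
      have "(\<Sum>j\<in>T. complex_of_real (1 / sqrt m)) = complex_of_real (m * (1 / sqrt m))"
        by (simp add: m_def)
      also have "m * (1 / sqrt m) = sqrt m" using mpos by (simp add: real_div_sqrt)
      finally show ?thesis .
    qed
    finally have "(\<Sum>j = min k n + 1 .. max k n. f j) = complex_of_real (sqrt m)" .
    thus ?thesis using mpos unfolding g_def by (simp add: norm_mult power_mult_distrib)
  qed
  have g0: "g k n \<ge> 0" for k n unfolding g_def by simp
  have "lval \<alpha> I f = (\<Sum>k\<in>I. \<Sum>n\<in>I - {k}. g k n)" unfolding lval_def g_def by simp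
  also have "\<dots> \<ge> (\<Sum>k\<in>L. \<Sum>n\<in>I - {k}. g k n)"
    using LI fin by (intro sum_mono2) (auto intro: sum_nonneg g0)
  also have "(\<Sum>k\<in>L. \<Sum>n\<in>I - {k}. g k n) \<ge> (\<Sum>k\<in>L. \<Sum>n\<in>R. g k n)"
  proof (intro sum_mono sum_mono2)
    fix k assume "k \<in> L"
    show "R \<subseteq> I - {k}" using RI ord[OF \<open>k \<in> L\<close>] by auto
  qed (use fin g0 in auto)
  also have "(\<Sum>k\<in>L. \<Sum>n\<in>R. g k n) = (\<Sum>k\<in>L. \<Sum>n\<in>R. (cmod (\<alpha> k))^2 * (cmod (\<alpha> n))^2 * m)"
    using key by simp
  also have "\<dots> = m * muI \<alpha> L * muI \<alpha> R"
    unfolding muI_def by (simp add: sum_product sum_distrib_left sum_distrib_right mult_ac)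
  finally show ?thesis by (simp add: m_def)
qed


lemma f_le1:
  assumes "\<forall>k. k \<notin> I \<longrightarrow> f k = 0" "norm2I I f \<le> 1" "finite I"
  shows "cmod (f j) \<le> 1"
proof (cases "j \<in> I")
  case True
  have s0: "(\<Sum>k\<in>I. (cmod (f k))^2) \<ge> 0" by (intro sum_nonneg) auto
  have "(cmod (f j))^2 \<le> (\<Sum>k\<in>I. (cmod (f k))^2)"
    using True assms(3) by (intro member_le_sum) auto
  also have "\<dots> = (norm2I I f)^2" unfolding norm2I_def using s0 by simp
  also have "\<dots> \<le> 1" using assms(2) unfolding norm2I_def
    using s0 by (intro power_le_one) auto
  finally show ?thesis by (simp add: power_le_one_iff abs_square_le_1)
next
  case False thus ?thesis using assms(1) by simp
qed

lemma lval_upper: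
  assumes "\<forall>k. k \<notin> {a..b} \<longrightarrow> f k = 0" "norm2I {a..b} f \<le> 1"
  shows "lval \<alpha> {a..b} f \<le> (\<Sum>k\<in>{a..b}. \<Sum>n\<in>{a..b} - {k}. (cmod (\<alpha> k) * cmod (\<alpha> n) * real b)^2)"
  unfolding lval_def
proof (intro sum_mono)
  fix k n assume k: "k \<in> {a..b}" and n: "n \<in> {a..b} - {k}"
  have "cmod (\<Sum>j = min k n + 1 .. max k n. f j) \<le> (\<Sum>j = min k n + 1 .. max k n. cmod (f j))"
    by (rule norm_sum)
  also have "\<dots> \<le> (\<Sum>j = min k n + 1 .. max k n. 1)"
    using f_le1[OF assms] by (intro sum_mono) auto
  also have "\<dots> = real (max k n - min k n)" by simp
  also have "\<dots> \<le> real b" using k n by auto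
  finally have "cmod (\<Sum>j = min k n + 1 .. max k n. f j) \<le> real b" .
  hence "cmod (\<alpha> k * \<alpha> n * (\<Sum>j = min k n + 1 .. max k n. f j)) \<le> cmod (\<alpha> k) * cmod (\<alpha> n) * real b"
    by (simp add: norm_mult mult_left_mono)
  thus "(cmod (\<alpha> k * \<alpha> n * (\<Sum>j = min k n + 1 .. max k n. f j)))^2 \<le> (cmod (\<alpha> k) * cmod (\<alpha> n) * real b)^2"
    by (intro power_mono) auto
qed

lemma f_in:
  assumes "T \<subseteq> I" "finite I" "T \<noteq> {}"
    and fdef: "f = (\<lambda>j. if j \<in> T then complex_of_real (1 / sqrt (real (card T))) else 0)"
  shows "(\<forall>k. k \<notin> I \<longrightarrow> f k = 0) \<and> norm2I I f \<le> 1"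
proof
  show "\<forall>k. k \<notin> I \<longrightarrow> f k = 0" using assms(1) fdef by auto
  have finT: "finite T" using assms(1,2) finite_subset by blast
  hence cpos: "real (card T) > 0" using assms(3) by (simp add: card_gt_0_iff)
  have "(\<Sum>k\<in>I. (cmod (f k))^2) = (\<Sum>k\<in>T. (cmod (f k))^2)"
    using assms(1,2) fdef by (intro sum.mono_neutral_right) auto
  also have "\<dots> = (\<Sum>k\<in>T. 1 / real (card T))"
    using cpos fdef by (intro sum.cong) (auto simp: power_divide norm_divide)
  also have "\<dots> = 1" using cpos by simp
  finally show "norm2I I f \<le> 1" unfolding norm2I_def by simp
qed


theorem lemma5p2:
  fixes \<alpha> :: "nat \<Rightarrow> complex" and a b :: nat and \<epsilon> :: real
  assumes l2: "summable (\<lambda>k. (cmod (\<alpha> k))^2)"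
    and ab: "a \<le> b"
    and eps: "\<epsilon> > 0"
    and S4: "card {k. Zblock k \<subseteq> {a..b} \<and> sigma \<alpha> k > \<epsilon>} \<ge> 4"
  shows "Jval \<alpha> a b > \<epsilon> / 2 \<and> Lval \<alpha> {a..b} > \<epsilon> / (2 * sqrt 2)"
proof -
  define S where "S = {k. Zblock k \<subseteq> {a..b} \<and> sigma \<alpha> k > \<epsilon>}"
  obtain k1 k2 k3 k4 where kk: "k1 < k2" "k2 < k3" "k3 < k4"
    and kS: "k1 \<in> S" "k2 \<in> S" "k3 \<in> S" "k4 \<in> S"
    using four_elems[OF S4[folded S_def]] by blast
  define mu where "mu k = muI \<alpha> (Zblock k)" for k
  have bnd: "a \<le> 2^k \<and> 2^(k+1) - 1 \<le> b" if "k \<in> S" for k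
  proof -
    have "2^k \<in> Zblock k" "2^(k+1) - 1 \<in> Zblock k" unfolding Zblock_def by auto
    thus ?thesis using that unfolding S_def by auto
  qed
  have mass: "2^(k+1) * mu k > \<epsilon>^2" if "k \<in> S" for k
    using block_mass[of \<epsilon> \<alpha> k] that eps unfolding S_def mu_def muI_def Zblock_def by auto
  have mu0: "mu k \<ge> 0" for k unfolding mu_def muI_def by (intro sum_nonneg) auto
  have p2: "(2::nat)^(k+1) \<le> 2^k'" if "k < k'" for k k'
    using that by (intro power_increasing) auto
  have p22: "(2::nat)^(k+2) \<le> 2^k'" if "k + 1 < k'" for k k'
    using that by (intro power_increasing) auto
  have b1: "a \<le> 2^k1" "2^(k1+1) - 1 \<le> b" using bnd[OF kS(1)] by auto
  have b3: "a \<le> 2^k3" "2^(k3+1) - 1 \<le> b" using bnd[OF kS(3)] by auto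
  have b4: "a \<le> 2^k4" "2^(k4+1) - 1 \<le> b" using bnd[OF kS(4)] by auto
  have m1: "2^(k1+1) * mu k1 > \<epsilon>^2" using mass kS by auto
  have m4: "2^(k4+1) * mu k4 > \<epsilon>^2" using mass kS by auto
  have e2: "\<epsilon>^2 > 0" using eps by simp
  have eps4: "(\<epsilon>/2)^2 = \<epsilon>^2/4" by (simp add: power_divide)
  have J: "Jval \<alpha> a b > \<epsilon> / 2"
    unfolding Jval_def
  proof (subst Min_gr_iff, simp, use ab in simp, intro ballI)
    fix x assume "x \<in> (\<lambda>c. max (Aval \<alpha> a c) (Bval \<alpha> b c)) ` {a..b}"
    then obtain c where c: "c \<in> {a..b}" and x: "x = max (Aval \<alpha> a c) (Bval \<alpha> b c)" by auto
    show "\<epsilon> / 2 < x"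
    proof (cases "c \<ge> 2^(k2+1)")
      case True
      define s where "s = 2^(k1+1) - (1::nat)"
      have q: "(2::nat)^(k1+2) \<le> 2^(k2+1)" by (rule power_increasing) (use kk in auto)
      have pp: "(2::nat)^(k1+2) = 2 * 2^(k1+1)" by simp
      have pos: "(1::nat) \<le> 2^(k1+1)" by simp
      have sI: "s \<in> {a..c}" using b1 True q pos unfolding s_def by auto
      have dist: "real c - real s \<ge> 2^(k1+1)"
      proof -
        have "c - s \<ge> 2^(k1+1)" using True q pos pp unfolding s_def by linarith
        hence "real (c - s) \<ge> real (2^(k1+1))" by linarith
        moreover have "s \<le> c" using sI by auto
        ultimately show ?thesis by (simp add: of_nat_diff)
      qed
      have sub: "Zblock k1 \<subseteq> {a..s}" using b1 unfolding Zblock_def s_def by auto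
      have msum: "(\<Sum>k = a..s. (cmod (\<alpha> k))^2) \<ge> mu k1"
        unfolding mu_def muI_def by (rule sum_mono2) (use sub in auto)
      have "(real c - real s) * (\<Sum>k = a..s. (cmod (\<alpha> k))^2) \<ge> 2^(k1+1) * mu k1"
        using dist msum mu0 sI by (intro mult_mono) auto
      hence "(real c - real s) * (\<Sum>k = a..s. (cmod (\<alpha> k))^2) > (\<epsilon>/2)^2"
        using m1 e2 eps4 by linarith
      hence "sqrt (real c - real s) * sqrt (\<Sum>k = a..s. (cmod (\<alpha> k))^2) > \<epsilon>/2"
        using dist sI by (intro sqrt_prod_gt) (auto intro: sum_nonneg)
      also have "\<dots> \<le> Aval \<alpha> a c" unfolding Aval_def
        by (rule Max_ge) (use sI in auto)
      finally show ?thesis using x by simp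
    next
      case False
      define s where "s = (2::nat)^k4"
      have q: "(2::nat)^(k2+2) \<le> 2^k4" by (rule power_increasing) (use kk in auto)
      have pp: "(2::nat)^(k2+2) = 2 * 2^(k2+1)" by simp
      have pp4: "(2::nat)^(k4+1) = 2 * 2^k4" by simp
      have sI: "s \<in> {c..b}" using b4 False q pp pp4 unfolding s_def by auto
      have dist: "2 * (real s - real c) \<ge> 2^k4"
      proof -
        have "2 * (s - c) \<ge> 2^k4" using False q pp unfolding s_def by linarith
        hence "real (2 * (s - c)) \<ge> real (2^k4)" by linarith
        moreover have "c \<le> s" using sI by auto
        ultimately show ?thesis by (simp add: of_nat_diff)
      qed
      have sub: "Zblock k4 \<subseteq> {s..b}" using b4 unfolding Zblock_def s_def by auto
      have msum: "(\<Sum>k = s..b. (cmod (\<alpha> k))^2) \<ge> mu k4"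
        unfolding mu_def muI_def by (rule sum_mono2) (use sub in auto)
      have "(2 * (real s - real c)) * (\<Sum>k = s..b. (cmod (\<alpha> k))^2) \<ge> 2^k4 * mu k4"
        using dist msum mu0 sI by (intro mult_mono) auto
      moreover have "2^(k4+1) * mu k4 = 2 * (2^k4 * mu k4)" by simp
      ultimately have "(real s - real c) * (\<Sum>k = s..b. (cmod (\<alpha> k))^2) > (\<epsilon>/2)^2"
        using m4 e2 eps4 by linarith
      hence "sqrt (real s - real c) * sqrt (\<Sum>k = s..b. (cmod (\<alpha> k))^2) > \<epsilon>/2"
        using dist sI by (intro sqrt_prod_gt) (auto intro: sum_nonneg)
      also have "\<dots> \<le> Bval \<alpha> b c" unfolding Bval_def
        by (rule Max_ge) (use sI in auto)
      finally show ?thesis using x by simp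
    qed
  qed
  define I where "I = {a..b}"
  define M where "M = muI \<alpha> I"
  have finI: "finite I" unfolding I_def by simp
  have Z1I: "Zblock k1 \<subseteq> I" using kS(1) unfolding S_def I_def by auto
  have Z4I: "Zblock k4 \<subseteq> I" using kS(4) unfolding S_def I_def by auto
  have mu1pos: "mu k1 > 0" using m1 e2 mu0[of k1]
    by (cases "mu k1 = 0") auto
  have Mge: "M \<ge> mu k1" unfolding M_def mu_def using mu_mono[OF Z1I finI] .
  hence Mpos: "M > 0" using mu1pos by simp
  define L1 where "L1 = {a..2^k3 - (1::nat)}"
  define R1 where "R1 = {(2::nat)^k3..b}"
  have pk3: "(1::nat) \<le> 2^k3" by simp
  have split: "I = L1 \<union> R1" "L1 \<inter> R1 = {}"
    using b3 pk3 unfolding I_def L1_def R1_def by auto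
  have Msplit: "M = muI \<alpha> L1 + muI \<alpha> R1"
    unfolding M_def muI_def split(1) by (rule sum.union_disjoint) (use split(2) in \<open>auto simp: L1_def R1_def\<close>)
  have main: "\<exists>f. (\<forall>k. k \<notin> I \<longrightarrow> f k = 0) \<and> norm2I I f \<le> 1 \<and> lval \<alpha> I f > M * (\<epsilon>^2 / 8)"
  proof (cases "muI \<alpha> L1 \<ge> M / 2")
    case True
    define T where "T = {(2::nat)^k3..2^k4}"
    define f where "f = (\<lambda>j. if j \<in> T then complex_of_real (1 / sqrt (real (card T))) else 0)"
    have q: "(2::nat)^(k3+1) \<le> 2^k4" by (rule power_increasing) (use kk in auto)
    have pp: "(2::nat)^(k3+1) = 2 * 2^k3" by simp
    have pp4: "(2::nat)^(k4+1) = 2 * 2^k4" by simp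
    have TI: "T \<subseteq> I" using b3 b4 pp4 unfolding T_def I_def by auto
    have ct: "2 * real (card T) \<ge> 2^k4"
    proof -
      have "2 * card T \<ge> 2^k4" unfolding T_def using q pp by simp
      hence "real (2 * card T) \<ge> real (2^k4)" by linarith
      thus ?thesis by simp
    qed
    have Tne: "T \<noteq> {}" unfolding T_def using q pp by (auto simp del: power_Suc)
    have l1: "lval \<alpha> I f \<ge> real (card T) * muI \<alpha> L1 * muI \<alpha> (Zblock k4)"
    proof (rule lval_lower[OF _ Z4I finI _ _ Tne f_def])
      show "L1 \<subseteq> I" using split by auto
      show "finite T" unfolding T_def by auto
      fix k n assume kn: "k \<in> L1" "n \<in> Zblock k4"
      have h1: "k \<le> 2^k3 - 1" "2^k4 \<le> n" using kn unfolding L1_def Zblock_def by auto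
      have h2: "(2::nat)^k3 \<le> 2^k4" using q pp by linarith
      have h3: "k + 1 \<le> 2^k3" using h1 pk3 by linarith
      have h4: "k < n" using h1 h2 h3 by linarith
      show "k < n \<and> T \<subseteq> {k + 1..n}" using h1 h2 h3 h4 unfolding T_def by auto
    qed
    have l2: "real (card T) * muI \<alpha> L1 * muI \<alpha> (Zblock k4) \<ge> real (card T) * (M/2) * mu k4"
      using True mu0 unfolding mu_def by (intro mult_right_mono mult_left_mono) auto
    have l3: "real (card T) * (M/2) * mu k4 = (M/4) * ((2 * real (card T)) * mu k4)" by simp
    have "(2 * real (card T)) * mu k4 \<ge> 2^k4 * mu k4" using ct mu0 by (intro mult_right_mono) auto
    hence l4: "(M/4) * ((2 * real (card T)) * mu k4) \<ge> (M/4) * (2^k4 * mu k4)" using Mpos by (intro mult_left_mono) auto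
    have l5: "(M/4) * (2^k4 * mu k4) > M * (\<epsilon>^2/8)" using m4 Mpos by simp
    have "lval \<alpha> I f > M * (\<epsilon>^2 / 8)" using l1 l2 l3 l4 l5 by linarith
    thus ?thesis using f_in[OF TI finI Tne f_def] by blast
  next
    case False
    hence R1big: "muI \<alpha> R1 \<ge> M / 2" using Msplit by simp
    define T where "T = {(2::nat)^(k1+1)..2^k3}"
    define f where "f = (\<lambda>j. if j \<in> T then complex_of_real (1 / sqrt (real (card T))) else 0)"
    have q: "(2::nat)^(k1+2) \<le> 2^k3" by (rule power_increasing) (use kk in auto)
    have pp: "(2::nat)^(k1+2) = 2 * 2^(k1+1)" by simp
    have pp3: "(2::nat)^(k3+1) = 2 * 2^k3" by simp
    have pos: "(1::nat) \<le> 2^(k1+1)" by simp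
    have TI: "T \<subseteq> I" using b1 b3 pp3 q pp unfolding T_def I_def by auto
    have ct: "real (card T) \<ge> 2^(k1+1)"
    proof -
      have "card T \<ge> 2^(k1+1)" unfolding T_def using q pp by simp
      hence "real (card T) \<ge> real (2^(k1+1))" by linarith
      thus ?thesis by simp
    qed
    have Tne: "T \<noteq> {}" unfolding T_def using q pp by (auto simp del: power_Suc)
    have l1: "lval \<alpha> I f \<ge> real (card T) * muI \<alpha> (Zblock k1) * muI \<alpha> R1"
    proof (rule lval_lower[OF Z1I _ finI _ _ Tne f_def])
      show "R1 \<subseteq> I" using split by auto
      show "finite T" unfolding T_def by auto
      fix k n assume kn: "k \<in> Zblock k1" "n \<in> R1"
      have h1: "k \<le> 2^(k1+1) - 1" "2^k3 \<le> n" using kn unfolding R1_def Zblock_def by auto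
      have h2: "(2::nat)^(k1+1) \<le> 2^k3" using q pp by linarith
      have h3: "k + 1 \<le> 2^(k1+1)" using h1 pos by linarith
      have h4: "k < n" using h1 h2 h3 by linarith
      show "k < n \<and> T \<subseteq> {k + 1..n}" using h1 h2 h3 h4 unfolding T_def by auto
    qed
    have l2: "real (card T) * muI \<alpha> (Zblock k1) * muI \<alpha> R1 \<ge> 2^(k1+1) * mu k1 * (M/2)"
      using R1big mu0 ct Mpos unfolding mu_def by (intro mult_mono) auto
    have l5: "2^(k1+1) * mu k1 * (M/2) > M * (\<epsilon>^2/8)"
    proof -
      have "2^(k1+1) * mu k1 * (M/2) > \<epsilon>^2 * (M/2)" using m1 Mpos by simp
      moreover have "\<epsilon>^2 * (M/2) \<ge> M * (\<epsilon>^2/8)" using Mpos e2 by simp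
      ultimately show ?thesis by linarith
    qed
    have "lval \<alpha> I f > M * (\<epsilon>^2 / 8)" using l1 l2 l5 by linarith
    thus ?thesis using f_in[OF TI finI Tne f_def] by blast
  qed
  then obtain f where f: "\<forall>k. k \<notin> I \<longrightarrow> f k = 0" "norm2I I f \<le> 1" "lval \<alpha> I f > M * (\<epsilon>^2 / 8)"
    by blast
  define X where "X = {lval \<alpha> I f / muI \<alpha> I | f. (\<forall>k. k \<notin> I \<longrightarrow> f k = 0) \<and> norm2I I f \<le> 1}"
  define B where "B = (\<Sum>k\<in>{a..b}. \<Sum>n\<in>{a..b} - {k}. (cmod (\<alpha> k) * cmod (\<alpha> n) * real b)^2)"
  have bdd: "bdd_above X"
  proof (rule bdd_aboveI[of _ "B / M"])
    fix x assume "x \<in> X"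
    then obtain g where g: "\<forall>k. k \<notin> I \<longrightarrow> g k = 0" "norm2I I g \<le> 1" and x: "x = lval \<alpha> I g / M"
      unfolding X_def M_def by auto
    have "lval \<alpha> I g \<le> B" unfolding B_def I_def by (rule lval_upper) (use g in \<open>auto simp: I_def\<close>)
    thus "x \<le> B / M" using x Mpos by (simp add: divide_right_mono)
  qed
  have xin: "lval \<alpha> I f / M \<in> X" unfolding X_def M_def using f(1,2) by blast
  have "\<epsilon>^2 / 8 < lval \<alpha> I f / M" using f(3) Mpos by (simp add: field_simps)
  also have "\<dots> \<le> Sup X" by (rule cSup_upper[OF xin bdd])
  finally have supgt: "\<epsilon>^2 / 8 < Sup X" .
  have "(\<epsilon> / (2 * sqrt 2))^2 = \<epsilon>^2 / 8" by (simp add: power_divide power_mult_distrib)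
  hence "\<epsilon> / (2 * sqrt 2) < sqrt (Sup X)" using supgt by (intro real_less_rsqrt) simp
  moreover have "Lval \<alpha> {a..b} = sqrt (Sup X)"
    unfolding Lval_def X_def using Mpos by (simp add: M_def I_def)
  ultimately show ?thesis using J by simp
qed

end
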